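(* Consider Algorithm AUX with parameter $t_0$ on an instance satisfying the standing assumption, with an edge labeling as in the context. Let $u,v$ be the two offline neighbors of a second-class online type. Then for every $t\in[0,1]$, we have $2\bar f_u(t)-g'_{u,v}(t)\ge \bar g(t)$.
   Context: **Model.** Poisson arrival model. Each online type $i$ independently arrives according to a Poisson process of rate $\lambda_i$ on $[0,1]$. On arrival, a vertex is immediately and irrevocably matched to an unmatched offline neighbor or discarded. Each offline vertex is matched at most once. The instance is a bipartite graph $(I,J,E)$ with rates $\lambda_i>0$. **Standing assumption.** There are values $x_{ij}\ge0$ (an optimal Jaillet–Lu LP solution) with $\sum_i x_{ij}=1$ for all $j$, and each type is one of two kinds: - first-class: one neighbor $j$, with $x_{ij}=\lambda_i$; - second-class: two neighbors $j_1,j_2$, with $x_{ij_1}=x_{ij_2}=\lambda_i/2$. **Labeling.** Each edge is labeled first-class or second-class. Edges of first-class types are labeled first-class. For every $j$, the first-class-labeled edges at $j$ have total $x$-value $1-\ln2$. **Reference process.** $H$ has offline vertices $a,b$; a type of rate $2\ln2$ adjacent to both; and types of rate $1-\ln2$ adjacent only to $a$, resp. only to $b$. Algorithm RES with parameter $t_0$ works as follows: - single-neighbor arrivals are matched if their neighbor is unmatched; - a two-neighbor arrival at time $t>t_0$ with an unmatched neighbor is matched to a uniformly random unmatched neighbor. On $H$ under RES, $f(t)$ is the probability that a given offline vertex is matched by time $t$, $g(t)$ the probability both are, and $\bar g=1-g$. **Algorithm AUX (parameter $t_0$).** Under AUX: - $f_u(t)$ is the probability that offline $u$ is matched by time $t$,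 and $\bar f_u=1-f_u$; - $g'_{u,v}(t)$ is the probability that both $u$ and $v$ are unmatched at time $t$. Edges are used only if their offline endpoint is unmatched. - A first-class arrival is matched to its neighbor if possible. - A second-class arrival of type $i$ with neighbors $u,v$ chooses at most one edge, with disjoint probabilities: - each first-class-labeled edge $(i,u)$ with probability $1/2$; - if the arrival time is $t>t_0$, each second-class-labeled edge $(i,u)$ with probability $\frac12\min\{\bar g(t)/(2\bar f_u(t)-g'_{u,v}(t)),1\}$ if $v$ is unmatched, or $\min\{\bar g(t)/(2\bar f_u(t)-g'_{u,v}(t)),1\}$ if $v$ is matched. *)

theory Defs
  imports "HOL-Analysis.Analysis"
begin

text \<open>Instance: online types I with rates lam and neighbourhoods nbr (subsets of the
offline vertex set J); values x.\<close>

definition standing ::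
  "'i set \<Rightarrow> 'j set \<Rightarrow> ('i \<Rightarrow> real) \<Rightarrow> ('i \<Rightarrow> 'j set) \<Rightarrow> ('i \<Rightarrow> 'j \<Rightarrow> real) \<Rightarrow> bool" where
  "standing I J lam nbr x \<longleftrightarrow>
     finite I \<and> finite J \<and>
     (\<forall>i\<in>I. lam i > 0 \<and> nbr i \<subseteq> J \<and>
        ((\<exists>j. nbr i = {j} \<and> x i j = lam i) \<or>
         (\<exists>j1 j2. j1 \<noteq> j2 \<and> nbr i = {j1, j2} \<and> x i j1 = lam i / 2 \<and> x i j2 = lam i / 2))) \<and>
     (\<forall>j\<in>J. (\<Sum>i\<in>{i\<in>I. j \<in> nbr i}. x i j) = 1)"

text \<open>Edge labeling: lab i j = True means the edge (i,j) is labeled first-class.\<close>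

definition valid_labeling ::
  "'i set \<Rightarrow> 'j set \<Rightarrow> ('i \<Rightarrow> 'j set) \<Rightarrow> ('i \<Rightarrow> 'j \<Rightarrow> real) \<Rightarrow> ('i \<Rightarrow> 'j \<Rightarrow> bool) \<Rightarrow> bool" where
  "valid_labeling I J nbr x lab \<longleftrightarrow>
     (\<forall>i\<in>I. card (nbr i) = 1 \<longrightarrow> (\<forall>j\<in>nbr i. lab i j)) \<and>
     (\<forall>j\<in>J. (\<Sum>i\<in>{i\<in>I. j \<in> nbr i \<and> lab i j}. x i j) = 1 - ln 2)"

text \<open>Law of a matching process whose state is the set S of matched offline vertices.
p t S is the probability that the matched set at time t is exactly S (S \<subseteq> J);
rate t S w is the rate at which unmatched w gets matched at time t in state S.
The Kolmogorov forward equations are stated in integral form on [0,1]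
(the rates may jump at t0).\<close>

definition kolmo ::
  "'j set \<Rightarrow> (real \<Rightarrow> 'j set \<Rightarrow> 'j \<Rightarrow> real) \<Rightarrow> (real \<Rightarrow> 'j set \<Rightarrow> real) \<Rightarrow> bool" where
  "kolmo J rate p \<longleftrightarrow>
     (\<forall>S. S \<subseteq> J \<longrightarrow> p 0 S = (if S = {} then 1 else 0)) \<and>
     (\<forall>t\<in>{0..1}. \<forall>S. S \<subseteq> J \<longrightarrow>
        ((\<lambda>s. (\<Sum>w\<in>S. p s (S - {w}) * rate s (S - {w}) w)
              - p s S * (\<Sum>w\<in>J - S. rate s S w)) has_integral (p t S - p 0 S)) {0..t})"

text \<open>Reference process H under RES: offline vertices a = True, b = False.
Each offline vertex has its own single-neighbour type of rate 1 - ln 2; the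
two-neighbour type has rate 2 ln 2 and, after t0, picks a uniformly random
unmatched neighbour.\<close>

definition rateRES :: "real \<Rightarrow> real \<Rightarrow> bool set \<Rightarrow> bool \<Rightarrow> real" where
  "rateRES t0 t S w =
     (1 - ln 2) + (if t0 < t then 2 * ln 2 * (if (\<not> w) \<in> S then 1 else 1 / 2) else 0)"

definition fbar :: "'j set \<Rightarrow> (real \<Rightarrow> 'j set \<Rightarrow> real) \<Rightarrow> 'j \<Rightarrow> real \<Rightarrow> real" where
  "fbar J p u t = (\<Sum>S\<in>{S. S \<subseteq> J \<and> u \<notin> S}. p t S)"

definition gprime :: "'j set \<Rightarrow> (real \<Rightarrow> 'j set \<Rightarrow> real) \<Rightarrow> 'j \<Rightarrow> 'j \<Rightarrow> real \<Rightarrow> real" where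
  "gprime J p u v t = (\<Sum>S\<in>{S. S \<subseteq> J \<and> u \<notin> S \<and> v \<notin> S}. p t S)"

text \<open>Probability that an arrival of type i at time t in state S chooses edge (i,w)
(w unmatched).  gbar is the function 1 - g of the reference process.\<close>

definition aux_prob ::
  "'j set \<Rightarrow> ('i \<Rightarrow> 'j set) \<Rightarrow> ('i \<Rightarrow> 'j \<Rightarrow> bool) \<Rightarrow> real \<Rightarrow> (real \<Rightarrow> real)
    \<Rightarrow> (real \<Rightarrow> 'j set \<Rightarrow> real) \<Rightarrow> real \<Rightarrow> 'j set \<Rightarrow> 'i \<Rightarrow> 'j \<Rightarrow> real" where
  "aux_prob J nbr lab t0 gbar p t S i w =
     (if card (nbr i) = 1 then 1
      else if lab i w then 1 / 2
      else if t0 < t then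
        (let v = the_elem (nbr i - {w});
             r = min (gbar t / (2 * fbar J p w t - gprime J p w v t)) 1
         in if v \<notin> S then r / 2 else r)
      else 0)"

definition aux_rate ::
  "'i set \<Rightarrow> 'j set \<Rightarrow> ('i \<Rightarrow> real) \<Rightarrow> ('i \<Rightarrow> 'j set) \<Rightarrow> ('i \<Rightarrow> 'j \<Rightarrow> bool) \<Rightarrow> real
    \<Rightarrow> (real \<Rightarrow> real) \<Rightarrow> (real \<Rightarrow> 'j set \<Rightarrow> real) \<Rightarrow> real \<Rightarrow> 'j set \<Rightarrow> 'j \<Rightarrow> real" where
  "aux_rate I J lam nbr lab t0 gbar p t S w =
     (\<Sum>i\<in>{i\<in>I. w \<in> nbr i}. lam i * aux_prob J nbr lab t0 gbar p t S i w)"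

end

theory Submission
  imports Defs
begin


lemma int_sub:
  fixes G y :: "real \<Rightarrow> real"
  assumes h: "\<forall>s\<in>{a..b}. (G has_integral (y s - y a)) {a..s}" and "a \<le> c" "c \<le> d" "d \<le> b"
  shows "(G has_integral (y d - y c)) {c..d}"
proof -
  have hd: "(G has_integral (y d - y a)) {a..d}" and hc: "(G has_integral (y c - y a)) {a..c}"
    using h assms by auto
  have int: "G integrable_on {a..d}" using hd by blast
  have ic: "G integrable_on {c..d}" using integrable_subinterval_real[OF int] assms by auto
  have "integral {a..c} G + integral {c..d} G = integral {a..d} G"
    using Henstock_Kurzweil_Integration.integral_combine[OF _ _ int] assms by auto
  moreover have "integral {a..c} G = y c - y a" "integral {a..d} G = y d - y a"
    using hc hd by (auto simp: integral_unique)
  ultimately have "integral {c..d} G = y d - y c" by simp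
  with integrable_integral[OF ic] show ?thesis by simp
qed

lemma int_cont:
  fixes G y :: "real \<Rightarrow> real"
  assumes h: "\<forall>s\<in>{a..b}. (G has_integral (y s - y a)) {a..s}" and "a \<le> b"
  shows "continuous_on {a..b} y"
proof -
  have int: "G integrable_on {a..b}" using h assms by auto
  have c1: "continuous_on {a..b} (\<lambda>s. integral {a..s} G)"
    by (rule indefinite_integral_continuous_1[OF int])
  have c2: "continuous_on {a..b} (\<lambda>s. y a + integral {a..s} G)"
    by (rule continuous_on_add[OF continuous_on_const c1])
  have eq: "y a + integral {a..s} G = y s" if "s \<in> {a..b}" for s
  proof -
    have "(G has_integral (y s - y a)) {a..s}" using h that by blast
    then show ?thesis by (simp add: integral_unique)
  qed
  show ?thesis by (rule continuous_on_eq[OF c2 eq])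
qed

lemma sign_lemma:
  fixes G y :: "real \<Rightarrow> real"
  assumes ab: "a \<le> b" and h: "\<forall>s\<in>{a..b}. (G has_integral (y s - y a)) {a..s}"
    and ya: "y a \<ge> 0" and sg: "\<And>s. s \<in> {a..b} \<Longrightarrow> y s \<le> 0 \<Longrightarrow> G s \<ge> 0"
  shows "\<forall>s\<in>{a..b}. y s \<ge> 0"
proof (rule ccontr)
  assume "\<not> ?thesis"
  then obtain s1 where s1: "s1 \<in> {a..b}" "y s1 < 0" by auto
  have cont: "continuous_on {a..b} y" using int_cont[OF h ab] .
  define Z where "Z = {a..s1} \<inter> y -` {0..}"
  have cont1: "continuous_on {a..s1} y" using cont s1 by (auto intro: continuous_on_subset)
  have "closed Z" unfolding Z_def
    by (rule continuous_closed_preimage[OF cont1]) auto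
  have Zb: "bdd_above Z" unfolding Z_def by (auto intro: bdd_aboveI[of _ s1])
  have aZ: "a \<in> Z" using ya s1 unfolding Z_def by auto
  define \<tau> where "\<tau> = Sup Z"
  have tZ: "\<tau> \<in> Z" unfolding \<tau>_def using \<open>closed Z\<close> Zb aZ closed_contains_Sup by blast
  have "\<tau> \<le> s1" "y \<tau> \<ge> 0" using tZ unfolding Z_def by auto
  then have ts: "\<tau> < s1" using s1 by (cases "\<tau> = s1") auto
  have at: "a \<le> \<tau>" using tZ unfolding Z_def by auto
  have neg: "y s < 0" if "s \<in> {\<tau><..s1}" for s
  proof (rule ccontr)
    assume "\<not> y s < 0"
    then have "s \<in> Z" using that at unfolding Z_def by auto
    then have "s \<le> \<tau>" unfolding \<tau>_def using Zb by (simp add: cSup_upper)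
    with that show False by auto
  qed
  have hi: "(G has_integral (y s1 - y \<tau>)) {\<tau>..s1}"
    using int_sub[OF h at] ts s1 by auto
  have hi2: "((\<lambda>s. if s = \<tau> then 0 else G s) has_integral (y s1 - y \<tau>)) {\<tau>..s1}"
    by (rule has_integral_spike_finite_eq[where S="{\<tau>}", THEN iffD1, OF _ _ hi]) auto
  have "0 \<le> y s1 - y \<tau>"
  proof (rule has_integral_nonneg[OF hi2])
    fix s assume "s \<in> {\<tau>..s1}"
    show "0 \<le> (if s = \<tau> then 0 else G s)"
      using neg[of s] sg[of s] \<open>s \<in> {\<tau>..s1}\<close> at s1 by auto
  qed
  moreover have "y \<tau> \<ge> 0" using tZ unfolding Z_def by auto
  ultimately show False using s1 by auto
qed



lemma local_gron:
  fixes e G :: "'j \<Rightarrow> real \<Rightarrow> real"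
  assumes fin: "finite J" and ne: "J \<noteq> {}" and ab: "a \<le> b" and K: "K \<ge> 0" "K * (b - a) < 1"
   and h: "\<forall>w\<in>J. \<forall>s\<in>{a..b}. (G w has_integral (e w s - e w a)) {a..s}"
   and e0: "\<forall>w\<in>J. e w a = 0" and epos: "\<forall>w\<in>J. \<forall>s\<in>{a..b}. e w s \<ge> 0"
   and bnd: "\<And>M w s. (\<forall>v\<in>J. \<forall>s\<in>{a..b}. e v s \<le> M) \<Longrightarrow> w\<in>J \<Longrightarrow> s\<in>{a..b} \<Longrightarrow> G w s \<le> K * M"
  shows "\<forall>w\<in>J. \<forall>s\<in>{a..b}. e w s = 0"
proof -
  have "\<forall>w\<in>J. \<exists>x\<in>{a..b}. \<forall>s\<in>{a..b}. e w s \<le> e w x"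
  proof
    fix w assume "w \<in> J"
    then have "continuous_on {a..b} (e w)" using int_cont[of a b "G w" "e w"] h ab by auto
    then show "\<exists>x\<in>{a..b}. \<forall>s\<in>{a..b}. e w s \<le> e w x"
      using continuous_attains_sup[of "{a..b}" "e w"] ab by auto
  qed
  then obtain sm where sm: "\<forall>w\<in>J. sm w \<in> {a..b} \<and> (\<forall>s\<in>{a..b}. e w s \<le> e w (sm w))"
    by metis
  define M where "M = Max ((\<lambda>w. e w (sm w)) ` J)"
  have fin2: "finite ((\<lambda>w. e w (sm w)) ` J)" using fin by simp
  have "M \<in> (\<lambda>w. e w (sm w)) ` J" unfolding M_def using Max_in[OF fin2] ne by auto
  then obtain w0 where w0: "w0 \<in> J" "e w0 (sm w0) = M" by auto
  have allM: "\<forall>v\<in>J. \<forall>s\<in>{a..b}. e v s \<le> M"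
  proof (intro ballI)
    fix v s assume "v \<in> J" "s \<in> {a..b}"
    then have "e v s \<le> e v (sm v)" using sm by auto
    also have "\<dots> \<le> M" unfolding M_def using Max_ge[OF fin2] \<open>v \<in> J\<close> by auto
    finally show "e v s \<le> M" .
  qed
  define s0 where "s0 = sm w0"
  have s0: "s0 \<in> {a..b}" using sm w0 unfolding s0_def by auto
  have Mpos: "M \<ge> 0" using epos w0 s0 unfolding s0_def by auto
  have hi: "(G w0 has_integral (e w0 s0 - e w0 a)) {a..s0}" using h w0 s0 by auto
  have hc: "((\<lambda>s. K * M) has_integral ((s0 - a) * (K * M))) {a..s0}"
    using has_integral_const_real[of "K * M" a s0] s0 by simp
  have "e w0 s0 - e w0 a \<le> (s0 - a) * (K * M)"
    by (rule has_integral_le[OF hi hc]) (use bnd[OF allM] w0 s0 in auto)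
  then have "M \<le> (s0 - a) * (K * M)" using e0 w0 s0 unfolding s0_def by auto
  also have "\<dots> \<le> (b - a) * (K * M)"
    using s0 K Mpos by (intro mult_right_mono) auto
  finally have "M * (1 - K * (b - a)) \<le> 0" by (simp add: algebra_simps)
  then have "M \<le> 0" using K by (simp add: mult_le_0_iff)
  then show ?thesis using allM epos by (meson order_antisym order_trans)
qed

lemma flow_down:
  fixes f :: "'j set \<Rightarrow> 'j \<Rightarrow> real"
  assumes fin: "finite J" and P: "\<And>T y. P (insert y T) \<longleftrightarrow> P T \<and> y \<notin> A"
  shows "(\<Sum>S\<in>{S. S \<subseteq> J \<and> P S}. (\<Sum>w\<in>S. f (S - {w}) w) - (\<Sum>w\<in>J - S. f S w))
       = - (\<Sum>S\<in>{S. S \<subseteq> J \<and> P S}. \<Sum>w\<in>(J - S) \<inter> A. f S w)"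
proof -
  let ?S = "{S. S \<subseteq> J \<and> P S}"
  have finS: "finite ?S" using fin by (auto intro: finite_subset[of _ "Pow J"])
  have key: "(\<Sum>S\<in>?S. \<Sum>w\<in>S. f (S - {w}) w) = (\<Sum>T\<in>?S. \<Sum>w\<in>(J - T) - A. f T w)"
  proof -
    have "(\<Sum>S\<in>?S. \<Sum>w\<in>S. f (S - {w}) w) = (\<Sum>(S,w)\<in>Sigma ?S (\<lambda>S. S). f (S - {w}) w)"
      using finS fin by (subst sum.Sigma) (auto intro: finite_subset)
    also have "\<dots> = (\<Sum>(T,w)\<in>Sigma ?S (\<lambda>T. (J - T) - A). f T w)"
    proof (rule sum.reindex_bij_witness[where i="\<lambda>(T,w). (insert w T, w)" and j="\<lambda>(S,w). (S - {w}, w)"])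
      fix a assume "a \<in> Sigma ?S (\<lambda>S. S)"
      then show "(case (case a of (S, w) \<Rightarrow> (S - {w}, w)) of (T, w) \<Rightarrow> (insert w T, w)) = a"
        by (auto simp: insert_absorb)
    next
      fix a assume a: "a \<in> Sigma ?S (\<lambda>S. S)"
      obtain S w where aa: "a = (S, w)" by fastforce
      have "P S" "S \<subseteq> J" "w \<in> S" using a aa by auto
      then have "P (insert w (S - {w}))" by (simp add: insert_absorb)
      then have "P (S - {w}) \<and> w \<notin> A" using P by blast
      then show "(case a of (S, w) \<Rightarrow> (S - {w}, w)) \<in> Sigma ?S (\<lambda>T. (J - T) - A)"
        using aa \<open>S \<subseteq> J\<close> \<open>w \<in> S\<close> by auto
    next
      fix b assume "b \<in> Sigma ?S (\<lambda>T. (J - T) - A)"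
      then show "(case (case b of (T, w) \<Rightarrow> (insert w T, w)) of (S, w) \<Rightarrow> (S - {w}, w)) = b"
        by auto
    next
      fix b assume b: "b \<in> Sigma ?S (\<lambda>T. (J - T) - A)"
      then show "(case b of (T, w) \<Rightarrow> (insert w T, w)) \<in> Sigma ?S (\<lambda>S. S)"
        using P by auto
    next
      fix a assume "a \<in> Sigma ?S (\<lambda>S. S)"
      then show "(case (case a of (S, w) \<Rightarrow> (S - {w}, w)) of (T, w) \<Rightarrow> f T w) = (case a of (S, w) \<Rightarrow> f (S - {w}) w)"
        by auto
    qed
    also have "\<dots> = (\<Sum>T\<in>?S. \<Sum>w\<in>(J - T) - A. f T w)"
      using finS fin by (subst sum.Sigma) auto
    finally show ?thesis .
  qed
  have split: "(\<Sum>w\<in>J - T. f T w) = (\<Sum>w\<in>(J - T) - A. f T w) + (\<Sum>w\<in>(J - T) \<inter> A. f T w)" for T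
    using fin by (metis add.commute finite_Diff sum.Int_Diff)
  show ?thesis
    unfolding sum_subtractf key using split by (simp add: sum.distrib sum_negf)
qed



lemma has_integral_add3:
  fixes f g :: "real \<Rightarrow> real"
  assumes "(f has_integral i) S" "(g has_integral j) S" "\<And>x. x \<in> S \<Longrightarrow> f x + g x = h x"
  shows "(h has_integral (i + j)) S"
  using has_integral_add[OF assms(1,2)] has_integral_cong[of S "\<lambda>x. f x + g x" h] assms(3) by auto

lemma aux_le: "0 \<le> (a::real) \<Longrightarrow> y \<le> 0 \<Longrightarrow> 0 \<le> b \<Longrightarrow> 0 \<le> z \<Longrightarrow> a * y \<le> b * z"
  by (meson mult_nonneg_nonneg mult_nonneg_nonpos order_trans)

lemma H_facts:
  fixes q :: "real \<Rightarrow> bool set \<Rightarrow> real" and t0 :: real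
  assumes k: "kolmo (UNIV :: bool set) (rateRES t0) q"
  shows "\<forall>s\<in>{0..1}. 1 - q s UNIV \<ge> 0"
    and "\<forall>s\<in>{0..1}. q s {} + q s {False} > 0"
    and "\<forall>t\<in>{0..1}. ((\<lambda>s. - (1 - ln 2) * (q s {} + q s {False}) - (if t0 < s then ln 2 else 0) * (1 - q s UNIV))
            has_integral ((q t {} + q t {False}) - 1)) {0..t}"
    and "\<forall>t\<in>{0..1}. ((\<lambda>s. - 2 * ((1 - ln 2) + (if t0 < s then 2 * ln 2 else 0)) * ((1 - q s UNIV) - (q s {} + q s {False})))
            has_integral ((1 - q t UNIV) - 1)) {0..t}"
    and "q 0 {} + q 0 {False} = 1" "1 - q 0 UNIV = 1"
proof -
  define K1 :: "real \<Rightarrow> real" where "K1 s = (1 - ln 2) + (if t0 < s then ln 2 else 0)" for s :: real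
  define RR :: "real \<Rightarrow> real" where "RR s = (1 - ln 2) + (if t0 < s then 2 * ln 2 else 0)" for s :: real
  have l2: "ln 2 < (1::real)" "0 < ln (2::real)" by (rule ln_2_less_1) simp
  have K1: "0 \<le> K1 s" "K1 s \<le> 1" for s using l2 unfolding K1_def by auto
  have RR: "0 \<le> RR s" for s using l2 unfolding RR_def by auto
  have i0: "q 0 {} = 1" "q 0 {True} = 0" "q 0 {False} = 0" "q 0 UNIV = 0"
    using k unfolding kolmo_def by auto
  have UT: "UNIV - {True} = {False}" "UNIV - {False} = {True}" "{False, True} - {True} = {False}" "{False, True} - {False} = {True}" by auto
  have h0: "((\<lambda>s. - (2 * K1 s) * q s {}) has_integral (q t {} - 1)) {0..t}"
    and ha: "((\<lambda>s. K1 s * q s {} - RR s * q s {True}) has_integral (q t {True})) {0..t}"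
    and hb: "((\<lambda>s. K1 s * q s {} - RR s * q s {False}) has_integral (q t {False})) {0..t}"
    and h2: "((\<lambda>s. RR s * (q s {True} + q s {False})) has_integral (q t UNIV)) {0..t}"
    if t: "t \<in> {0..1}" for t
  proof -
    have h: "((\<lambda>s. (\<Sum>w\<in>S. q s (S - {w}) * rateRES t0 s (S - {w}) w) -
                  q s S * sum (rateRES t0 s S) (UNIV - S)) has_integral (q t S - q 0 S)) {0..t}" for S
      using k t unfolding kolmo_def by blast
    show "((\<lambda>s. - (2 * K1 s) * q s {}) has_integral (q t {} - 1)) {0..t}"
      by (rule has_integral_cong[THEN iffD1, OF _ h[of "{}", unfolded i0]])
         (simp add: UNIV_bool rateRES_def K1_def algebra_simps)
    show "((\<lambda>s. K1 s * q s {} - RR s * q s {True}) has_integral (q t {True})) {0..t}"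
      by (rule has_integral_cong[THEN iffD1, OF _ h[of "{True}", unfolded i0 diff_zero]])
         (simp add: UT rateRES_def K1_def RR_def algebra_simps)
    show "((\<lambda>s. K1 s * q s {} - RR s * q s {False}) has_integral (q t {False})) {0..t}"
      by (rule has_integral_cong[THEN iffD1, OF _ h[of "{False}", unfolded i0 diff_zero]])
         (simp add: UT rateRES_def K1_def RR_def algebra_simps)
    show "((\<lambda>s. RR s * (q s {True} + q s {False})) has_integral (q t UNIV)) {0..t}"
      by (rule has_integral_cong[THEN iffD1, OF _ h[of "UNIV", unfolded i0 diff_zero]])
         (simp add: UT UNIV_bool rateRES_def K1_def RR_def algebra_simps)
  qed
  have sum1: "q t {} + q t {True} + q t {False} + q t UNIV = 1" if t: "t \<in> {0..1}" for t
  proof -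
    have "((\<lambda>s. (- (2 * K1 s) * q s {}) + (K1 s * q s {} - RR s * q s {True}) + (K1 s * q s {} - RR s * q s {False})
        + RR s * (q s {True} + q s {False})) has_integral ((q t {} - 1) + q t {True} + q t {False} + q t UNIV)) {0..t}"
      by (intro has_integral_add h0[OF t] ha[OF t] hb[OF t] h2[OF t])
    then have "((\<lambda>s. 0) has_integral ((q t {} - 1) + q t {True} + q t {False} + q t UNIV)) {0..t}"
      by (rule has_integral_cong[THEN iffD1, rotated]) (simp add: algebra_simps)
    then have "(q t {} - 1) + q t {True} + q t {False} + q t UNIV = 0"
      using has_integral_unique has_integral_0 by blast
    then show ?thesis by simp
  qed
  have q0pos: "\<forall>s\<in>{0..1}. q s {} \<ge> 0"
    by (rule sign_lemma[where G="\<lambda>s. - (2 * K1 s) * q s {}"])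
       (use h0 i0 K1 in \<open>auto intro: mult_nonneg_nonpos\<close>)
  have qapos: "\<forall>s\<in>{0..1}. q s {True} \<ge> 0"
    by (rule sign_lemma[where G="\<lambda>s. K1 s * q s {} - RR s * q s {True}"])
       (use ha i0 K1 RR q0pos in \<open>auto intro!: aux_le mult_nonneg_nonpos simp: algebra_simps\<close>)
  have qbpos: "\<forall>s\<in>{0..1}. q s {False} \<ge> 0"
    by (rule sign_lemma[where G="\<lambda>s. K1 s * q s {} - RR s * q s {False}"])
       (use hb i0 K1 RR q0pos in \<open>auto intro!: aux_le mult_nonneg_nonpos simp: algebra_simps\<close>)
  have hd: "((\<lambda>s. - RR s * (q s {True} - q s {False})) has_integral (q t {True} - q t {False})) {0..t}"
    if "t \<in> {0..1}" for t
    using has_integral_diff[OF ha[OF that] hb[OF that]] has_integral_cong by (simp add: algebra_simps)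
  have hd2: "((\<lambda>s. - RR s * (q s {False} - q s {True})) has_integral (q t {False} - q t {True})) {0..t}"
    if "t \<in> {0..1}" for t
    using has_integral_diff[OF hb[OF that] ha[OF that]] has_integral_cong by (simp add: algebra_simps)
  have d1: "\<forall>s\<in>{0..1}. q s {True} - q s {False} \<ge> 0"
  proof (rule sign_lemma[where G="\<lambda>s. - RR s * (q s {True} - q s {False})"])
    fix s :: real assume "q s {True} - q s {False} \<le> 0"
    then show "0 \<le> - RR s * (q s {True} - q s {False})" using RR[of s]
      by (metis minus_mult_commute mult_nonneg_nonneg neg_0_le_iff_le)
  qed (use hd i0 in auto)
  have d2: "\<forall>s\<in>{0..1}. q s {False} - q s {True} \<ge> 0"
  proof (rule sign_lemma[where G="\<lambda>s. - RR s * (q s {False} - q s {True})"])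
    fix s :: real assume "q s {False} - q s {True} \<le> 0"
    then show "0 \<le> - RR s * (q s {False} - q s {True})" using RR[of s]
      by (metis minus_mult_commute mult_nonneg_nonneg neg_0_le_iff_le)
  qed (use hd2 i0 in auto)
  have sym: "q s {True} = q s {False}" if "s \<in> {0..1}" for s using d1 d2 that by force
  have hexp: "((\<lambda>s. 2 * exp (-2 * s)) has_integral (1 - exp (-2 * t))) {0..t}" if "t \<in> {0..1}" for t :: real
  proof -
    have "((\<lambda>s::real. 2 * exp (-2 * s)) has_integral ((\<lambda>s::real. - exp (-2 * s)) t - (\<lambda>s::real. - exp (-2 * s)) 0)) {0..t}"
    proof (rule fundamental_theorem_of_calculus)
      show "0 \<le> t" using that by auto
      fix x :: real
      have "((\<lambda>s. - exp (-2 * s)) has_real_derivative 2 * exp (-2 * x)) (at x within {0..t})"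
        by (auto intro!: derivative_eq_intros)
      then show "((\<lambda>s. - exp (-2 * s)) has_vector_derivative 2 * exp (-2 * x)) (at x within {0..t})"
        by (simp add: has_real_derivative_iff_has_vector_derivative)
    qed
    then show ?thesis by simp
  qed
  have expb: "\<forall>s\<in>{0..1}. q s {} - exp (-2 * s) \<ge> 0"
  proof (rule sign_lemma[where G="\<lambda>s. - (2 * K1 s) * q s {} + 2 * exp (-2 * s)"])
    show "\<forall>s\<in>{0..1}. ((\<lambda>s. - (2 * K1 s) * q s {} + 2 * exp (-2 * s)) has_integral
        (q s {} - exp (-2 * s) - (q 0 {} - exp (-2 * 0)))) {0..s}"
      using has_integral_add[OF h0 hexp] i0 by (auto simp: algebra_simps)
  next
    fix s :: real assume s: "s \<in> {0..1}" "q s {} - exp (-2 * s) \<le> 0"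
    have "q s {} \<ge> 0" using q0pos s by auto
    then have "K1 s * q s {} \<le> 1 * q s {}" using K1[of s] by (intro mult_right_mono) auto
    then have "2 * K1 s * q s {} \<le> 2 * q s {}" by simp
    then show "0 \<le> - (2 * K1 s) * q s {} + 2 * exp (-2 * s)" using s by auto
  qed (use i0 in auto)
  show "\<forall>s\<in>{0..1}. 1 - q s UNIV \<ge> 0"
    using sum1 q0pos qapos qbpos by (smt (verit))
  show "\<forall>s\<in>{0..1}. q s {} + q s {False} > 0"
    using expb qbpos by (smt (verit) exp_gt_zero)
  show "\<forall>t\<in>{0..1}. ((\<lambda>s. - (1 - ln 2) * (q s {} + q s {False}) - (if t0 < s then ln 2 else 0) * (1 - q s UNIV))
            has_integral ((q t {} + q t {False}) - 1)) {0..t}"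
  proof
    fix t :: real assume t: "t \<in> {0..1}"
    show "((\<lambda>s. - (1 - ln 2) * (q s {} + q s {False}) - (if t0 < s then ln 2 else 0) * (1 - q s UNIV))
            has_integral ((q t {} + q t {False}) - 1)) {0..t}"
    proof -
      have "((\<lambda>s. - (1 - ln 2) * (q s {} + q s {False}) - (if t0 < s then ln 2 else 0) * (1 - q s UNIV))
            has_integral ((q t {} - 1) + q t {False})) {0..t}"
      proof (rule has_integral_add3[OF h0[OF t] hb[OF t]])
        fix x assume x: "x \<in> {0..t}"
        then have x1: "x \<in> {0..1}" using t by auto
        have eq: "1 - q x UNIV = q x {} + 2 * q x {False}" using sum1[OF x1] sym[OF x1] by simp
        show "- (2 * K1 x) * q x {} + (K1 x * q x {} - RR x * q x {False}) =
          - (1 - ln 2) * (q x {} + q x {False}) - (if t0 < x then ln 2 else 0) * (1 - q x UNIV)"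
          unfolding eq K1_def RR_def by (simp add: algebra_simps)
      qed
      then show ?thesis by (simp add: algebra_simps)
    qed
  qed
  show "\<forall>t\<in>{0..1}. ((\<lambda>s. - 2 * ((1 - ln 2) + (if t0 < s then 2 * ln 2 else 0)) * ((1 - q s UNIV) - (q s {} + q s {False})))
            has_integral ((1 - q t UNIV) - 1)) {0..t}"
  proof
    fix t :: real assume t: "t \<in> {0..1}"
    have "((\<lambda>s. - (RR s * (q s {True} + q s {False}))) has_integral (- q t UNIV)) {0..t}"
      using has_integral_neg[OF h2[OF t]] by simp
    moreover have "- (RR x * (q x {True} + q x {False})) = - 2 * ((1 - ln 2) + (if t0 < x then 2 * ln 2 else 0)) * ((1 - q x UNIV) - (q x {} + q x {False}))"
      if x: "x \<in> {0..t}" for x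
    proof -
      have x1: "x \<in> {0..1}" using x t by auto
      have eq: "1 - q x UNIV - (q x {} + q x {False}) = q x {False}" using sum1[OF x1] sym[OF x1] by simp
      show ?thesis unfolding eq RR_def using sym[OF x1] by (simp add: algebra_simps)
    qed
    ultimately have "((\<lambda>s. - 2 * ((1 - ln 2) + (if t0 < s then 2 * ln 2 else 0)) * ((1 - q s UNIV) - (q s {} + q s {False})))
            has_integral (- q t UNIV)) {0..t}"
      by (rule has_integral_cong[THEN iffD1, rotated]) auto
    then show "((\<lambda>s. - 2 * ((1 - ln 2) + (if t0 < s then 2 * ln 2 else 0)) * ((1 - q s UNIV) - (q s {} + q s {False})))
            has_integral ((1 - q t UNIV) - 1)) {0..t}" by simp
  qed
  show "q 0 {} + q 0 {False} = 1" "1 - q 0 UNIV = 1" using i0 by auto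
qed



locale AUXL =
  fixes I :: "'i set" and J :: "'j set" and lam :: "'i \<Rightarrow> real"
    and nbr :: "'i \<Rightarrow> 'j set" and x :: "'i \<Rightarrow> 'j \<Rightarrow> real" and lab :: "'i \<Rightarrow> 'j \<Rightarrow> bool"
    and t0 :: real and q :: "real \<Rightarrow> bool set \<Rightarrow> real" and p :: "real \<Rightarrow> 'j set \<Rightarrow> real"
  assumes st: "standing I J lam nbr x"
    and vl: "valid_labeling I J nbr x lab"
    and kq: "kolmo (UNIV :: bool set) (rateRES t0) q"
    and kp: "kolmo J (aux_rate I J lam nbr lab t0 (\<lambda>s. 1 - q s UNIV) p) p"
begin

abbreviation "gb s \<equiv> 1 - q s UNIV"
abbreviation "rr \<equiv> aux_rate I J lam nbr lab t0 (\<lambda>s. 1 - q s UNIV) p"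
definition "ph s = q s {} + q s {False}"
definition "fb w s = fbar J p w s"
definition "gp w v s = gprime J p w v s"
definition "DD w v s = 2 * fb w s - gp w v s"
definition "ov i w = the_elem (nbr i - {w})"
definition "rho s i w = min (gb s / DD w (ov i w) s) 1"
definition "I2 w = {i\<in>I. w \<in> nbr i \<and> \<not> lab i w}"
definition "RR s = (1 - ln (2::real)) + (if t0 < s then 2 * ln 2 else 0)"

lemma st_all: "finite I \<and> finite J \<and>
     (\<forall>i\<in>I. lam i > 0 \<and> nbr i \<subseteq> J \<and>
        ((\<exists>j. nbr i = {j} \<and> x i j = lam i) \<or>
         (\<exists>j1 j2. j1 \<noteq> j2 \<and> nbr i = {j1, j2} \<and> x i j1 = lam i / 2 \<and> x i j2 = lam i / 2))) \<and>
     (\<forall>j\<in>J. (\<Sum>i\<in>{i\<in>I. j \<in> nbr i}. x i j) = 1)"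
  using st unfolding standing_def by assumption

lemma finI: "finite I" and finJ: "finite J" using st_all by blast+

lemma st_i: "i \<in> I \<Longrightarrow> lam i > 0 \<and> nbr i \<subseteq> J \<and>
        ((\<exists>j. nbr i = {j} \<and> x i j = lam i) \<or>
         (\<exists>j1 j2. j1 \<noteq> j2 \<and> nbr i = {j1, j2} \<and> x i j1 = lam i / 2 \<and> x i j2 = lam i / 2))"
  using st_all by blast

lemma st_j: "j \<in> J \<Longrightarrow> (\<Sum>i\<in>{i\<in>I. j \<in> nbr i}. x i j) = 1"
  using st_all by blast

lemma vl_all: "(\<forall>i\<in>I. card (nbr i) = 1 \<longrightarrow> (\<forall>j\<in>nbr i. lab i j)) \<and>
     (\<forall>j\<in>J. (\<Sum>i\<in>{i\<in>I. j \<in> nbr i \<and> lab i j}. x i j) = 1 - ln 2)"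
  using vl unfolding valid_labeling_def by assumption

lemma nbrJ: "i \<in> I \<Longrightarrow> nbr i \<subseteq> J" using st_i by blast

lemma types:
  assumes i: "i \<in> I" and w: "w \<in> nbr i"
  shows "(card (nbr i) = 1 \<and> x i w = lam i) \<or>
         (card (nbr i) = 2 \<and> x i w = lam i / 2 \<and> nbr i = {w, ov i w} \<and> ov i w \<noteq> w)"
proof -
  have "(\<exists>j. nbr i = {j} \<and> x i j = lam i) \<or>
         (\<exists>j1 j2. j1 \<noteq> j2 \<and> nbr i = {j1, j2} \<and> x i j1 = lam i / 2 \<and> x i j2 = lam i / 2)"
    using st_i[OF i] by (rule conjunct2[OF conjunct2])
  then show ?thesis
  proof
    assume "\<exists>j. nbr i = {j} \<and> x i j = lam i"
    then obtain j where j: "nbr i = {j}" "x i j = lam i" by blast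
    then have "j = w" using w by auto
    then show ?thesis using j by simp
  next
    assume "\<exists>j1 j2. j1 \<noteq> j2 \<and> nbr i = {j1, j2} \<and> x i j1 = lam i / 2 \<and> x i j2 = lam i / 2"
    then obtain j1 j2 where j: "j1 \<noteq> j2" "nbr i = {j1, j2}" "x i j1 = lam i / 2" "x i j2 = lam i / 2" by blast
    show ?thesis
    proof (cases "w = j1")
      case True
      then have "nbr i - {w} = {j2}" using j by auto
      then have "ov i w = j2" unfolding ov_def by simp
      then show ?thesis using j True by auto
    next
      case False
      then have "w = j2" using j w by auto
      then have "nbr i - {w} = {j1}" using j by auto
      then have "ov i w = j1" unfolding ov_def by simp
      then show ?thesis using j \<open>w = j2\<close> by (auto simp: insert_commute)
    qed
  qed
qed

lemma lam_pos: "i \<in> I \<Longrightarrow> lam i > 0" using st_i by blast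

lemma x_pos: "i \<in> I \<Longrightarrow> w \<in> nbr i \<Longrightarrow> x i w > 0"
  using types lam_pos by fastforce

lemma I2_props:
  assumes "i \<in> I2 w"
  shows "i \<in> I" "w \<in> nbr i" "\<not> lab i w" "card (nbr i) = 2" "x i w = lam i / 2"
    "nbr i = {w, ov i w}" "ov i w \<noteq> w" "ov i w \<in> J"
proof -
  show i: "i \<in> I" "w \<in> nbr i" "\<not> lab i w" using assms unfolding I2_def by auto
  have "card (nbr i) \<noteq> 1" using vl_all i by blast
  then show "card (nbr i) = 2" "x i w = lam i / 2" "nbr i = {w, ov i w}" "ov i w \<noteq> w"
    using types[OF i(1,2)] by auto
  then show "ov i w \<in> J" using nbrJ[OF i(1)] by auto
qed

lemma finI2: "finite (I2 w)" using finI unfolding I2_def by auto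

lemma sum_lab: "w \<in> J \<Longrightarrow> (\<Sum>i\<in>{i\<in>I. w \<in> nbr i \<and> lab i w}. x i w) = 1 - ln 2"
  using vl_all by blast

lemma sum_I2: assumes "w \<in> J" shows "(\<Sum>i\<in>I2 w. x i w) = ln 2"
proof -
  have "(\<Sum>i\<in>{i\<in>I. w \<in> nbr i}. x i w) = 1" using st_j assms by blast
  moreover have "{i\<in>I. w \<in> nbr i} = {i\<in>I. w \<in> nbr i \<and> lab i w} \<union> I2 w" unfolding I2_def by auto
  moreover have "(\<Sum>i\<in>{i\<in>I. w \<in> nbr i \<and> lab i w} \<union> I2 w. x i w) =
      (\<Sum>i\<in>{i\<in>I. w \<in> nbr i \<and> lab i w}. x i w) + (\<Sum>i\<in>I2 w. x i w)"
    by (rule sum.union_disjoint) (use finI in \<open>auto simp: I2_def\<close>)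
  ultimately show ?thesis using sum_lab[OF assms] by simp
qed

lemma rate_formula:
  assumes w: "w \<in> J"
  shows "rr s S w = (1 - ln 2) + (if t0 < s then (\<Sum>i\<in>I2 w. x i w * rho s i w * (if ov i w \<in> S then 2 else 1)) else 0)"
proof -
  let ?I1 = "{i\<in>I. w \<in> nbr i \<and> lab i w}"
  let ?f = "\<lambda>i. lam i * aux_prob J nbr lab t0 (\<lambda>s. 1 - q s UNIV) p s S i w"
  have un: "{i\<in>I. w \<in> nbr i} = ?I1 \<union> I2 w" unfolding I2_def by auto
  have "rr s S w = sum ?f (?I1 \<union> I2 w)" unfolding aux_rate_def un ..
  also have "\<dots> = sum ?f ?I1 + sum ?f (I2 w)"
    by (rule sum.union_disjoint) (use finI in \<open>auto simp: I2_def\<close>)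
  also have "sum ?f ?I1 = (\<Sum>i\<in>?I1. x i w)"
  proof (rule sum.cong[OF refl])
    fix i assume i: "i \<in> ?I1"
    then have ii: "i \<in> I" "w \<in> nbr i" "lab i w" by auto
    show "?f i = x i w"
      using types[OF ii(1,2)] ii(3) unfolding aux_prob_def by auto
  qed
  also have "\<dots> = 1 - ln 2" using sum_lab[OF w] .
  also have "sum ?f (I2 w) = (if t0 < s then (\<Sum>i\<in>I2 w. x i w * rho s i w * (if ov i w \<in> S then 2 else 1)) else 0)"
  proof (cases "t0 < s")
    case True
    have "sum ?f (I2 w) = (\<Sum>i\<in>I2 w. x i w * rho s i w * (if ov i w \<in> S then 2 else 1))"
    proof (rule sum.cong[OF refl])
      fix i assume i: "i \<in> I2 w"
      note P = I2_props[OF i]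
      have ap: "aux_prob J nbr lab t0 (\<lambda>s. 1 - q s UNIV) p s S i w = (if ov i w \<notin> S then rho s i w / 2 else rho s i w)"
        using P(3,4) True unfolding aux_prob_def rho_def DD_def fb_def gp_def ov_def by (simp add: Let_def)
      have lx: "lam i = 2 * x i w" using P(5) by simp
      show "?f i = x i w * rho s i w * (if ov i w \<in> S then 2 else 1)"
        unfolding ap lx by (cases "ov i w \<in> S") auto
    qed
    then show ?thesis using True by simp
  next
    case False
    have "sum ?f (I2 w) = 0"
    proof (rule sum.neutral, rule ballI)
      fix i assume i: "i \<in> I2 w"
      note P = I2_props[OF i]
      show "?f i = 0" using P False unfolding aux_prob_def by auto
    qed
    then show ?thesis using False by simp
  qed
  finally show ?thesis .
qed


lemma min_div_le: "(g::real) \<ge> 0 \<Longrightarrow> min (g / d) 1 * d \<le> g"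
proof (cases "d > 0")
  case True
  assume g: "g \<ge> 0"
  have "min (g / d) 1 * d \<le> (g / d) * d" using True by (intro mult_right_mono) auto
  then show ?thesis using True by simp
next
  case False
  assume g: "g \<ge> 0"
  show ?thesis
  proof (cases "d = 0")
    case True then show ?thesis using g by simp
  next
    case False
    then have "d < 0" using \<open>\<not> d > 0\<close> by simp
    then have "g / d \<le> 0" using g by (simp add: divide_nonneg_neg)
    then have "min (g / d) 1 = g / d" by simp
    then show ?thesis using \<open>d < 0\<close> by simp
  qed
qed

lemma min_div_eq: "(g::real) \<ge> 0 \<Longrightarrow> d \<ge> 0 \<Longrightarrow> min (g / d) 1 * d = min g d"
proof (cases "d = 0")
  case False
  assume "g \<ge> 0" "d \<ge> 0"
  then have d: "d > 0" using False by simp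
  show ?thesis
  proof (cases "g \<le> d")
    case True
    then have "g / d \<le> 1" using d by (simp add: divide_le_eq_1)
    then show ?thesis using True d by (simp add: min_def)
  next
    case False
    then have "g / d > 1" using d by (simp add: less_divide_eq_1)
    then show ?thesis using False d by (simp add: min_def)
  qed
qed (auto simp: min_def)

lemma rho_le1: "rho s i w \<le> 1" unfolding rho_def by simp

lemma rate_le: assumes w: "w \<in> J" shows "rr s S w \<le> RR s"
proof (cases "t0 < s")
  case True
  have "(\<Sum>i\<in>I2 w. x i w * rho s i w * (if ov i w \<in> S then 2 else 1)) \<le> (\<Sum>i\<in>I2 w. x i w * 2)"
  proof (rule sum_mono)
    fix i assume i: "i \<in> I2 w"
    have x: "x i w \<ge> 0" using x_pos[OF I2_props(1,2)[OF i]] by simp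
    have "rho s i w * (if ov i w \<in> S then 2 else 1) \<le> 1 * (if ov i w \<in> S then 2 else 1)"
      using rho_le1 by (intro mult_right_mono) auto
    also have "\<dots> \<le> 2" by simp
    finally have "x i w * (rho s i w * (if ov i w \<in> S then 2 else 1)) \<le> x i w * 2"
      using x by (intro mult_left_mono) auto
    then show "x i w * rho s i w * (if ov i w \<in> S then 2 else 1) \<le> x i w * 2"
      by (simp add: mult.assoc)
  qed
  also have "\<dots> = 2 * ln 2" using sum_I2[OF w] by (simp add: sum_distrib_right[symmetric])
  finally show ?thesis unfolding rate_formula[OF w] RR_def using True by simp
next
  case False
  then show ?thesis unfolding rate_formula[OF w] RR_def by simp
qed

lemma rate_nonneg:
  assumes w: "w \<in> J" and g: "gb s \<ge> 0" and D: "\<forall>v\<in>J. DD w v s \<ge> 0"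
  shows "rr s S w \<ge> 0"
proof -
  have "0 \<le> (\<Sum>i\<in>I2 w. x i w * rho s i w * (if ov i w \<in> S then 2 else 1))"
  proof (rule sum_nonneg)
    fix i assume i: "i \<in> I2 w"
    have x: "x i w \<ge> 0" using x_pos[OF I2_props(1,2)[OF i]] by simp
    have "DD w (ov i w) s \<ge> 0" using D I2_props(8)[OF i] by blast
    then have "rho s i w \<ge> 0" unfolding rho_def using g by simp
    then show "0 \<le> x i w * rho s i w * (if ov i w \<in> S then 2 else 1)" using x by simp
  qed
  moreover have "ln (2::real) < 1" by (rule ln_2_less_1)
  ultimately show ?thesis unfolding rate_formula[OF w] by simp
qed

lemma finPJ: "finite {S. S \<subseteq> J \<and> P S}"
  using finJ by (auto intro: finite_subset[of _ "Pow J"])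

lemma split_v:
  "(\<Sum>S\<in>{S. S \<subseteq> J \<and> w \<notin> S}. g S) =
   (\<Sum>S\<in>{S. S \<subseteq> J \<and> w \<notin> S \<and> v \<notin> S}. g S) + (\<Sum>S\<in>{S. S \<subseteq> J \<and> w \<notin> S \<and> v \<in> S}. g S)"
proof -
  have "{S. S \<subseteq> J \<and> w \<notin> S} = {S. S \<subseteq> J \<and> w \<notin> S \<and> v \<notin> S} \<union> {S. S \<subseteq> J \<and> w \<notin> S \<and> v \<in> S}"
    by auto
  then show ?thesis
    by (simp only:) (rule sum.union_disjoint, rule finPJ, rule finPJ, auto)
qed

lemma fb_gp: "fb w s - gp w v s = (\<Sum>S\<in>{S. S \<subseteq> J \<and> w \<notin> S \<and> v \<in> S}. p s S)"
  unfolding fb_def gp_def fbar_def gprime_def using split_v[where w=w and g="p s" and v=v] by simp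

lemma sumD: "(\<Sum>S\<in>{S. S \<subseteq> J \<and> w \<notin> S}. p s S * (if v \<in> S then 2 else 1)) = DD w v s"
proof -
  have a: "(\<Sum>S\<in>{S. S \<subseteq> J \<and> w \<notin> S \<and> v \<notin> S}. p s S * (if v \<in> S then 2 else 1)) = gp w v s"
    unfolding gp_def gprime_def by (rule sum.cong) auto
  have b: "(\<Sum>S\<in>{S. S \<subseteq> J \<and> w \<notin> S \<and> v \<in> S}. p s S * (if v \<in> S then 2 else 1)) = 2 * (fb w s - gp w v s)"
    unfolding fb_gp sum_distrib_left by (rule sum.cong) auto
  show ?thesis unfolding split_v[where w=w and v=v] a b DD_def by simp
qed

lemma sum_pr:
  assumes w: "w \<in> J"
  shows "(\<Sum>S\<in>{S. S \<subseteq> J \<and> w \<notin> S}. p s S * rr s S w) =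
    (1 - ln 2) * fb w s + (if t0 < s then (\<Sum>i\<in>I2 w. x i w * rho s i w * DD w (ov i w) s) else 0)"
proof (cases "t0 < s")
  case True
  have "(\<Sum>S\<in>{S. S \<subseteq> J \<and> w \<notin> S}. p s S * rr s S w) =
     (\<Sum>S\<in>{S. S \<subseteq> J \<and> w \<notin> S}. (1 - ln 2) * p s S + (\<Sum>i\<in>I2 w. x i w * rho s i w * (p s S * (if ov i w \<in> S then 2 else 1))))"
    unfolding rate_formula[OF w] using True by (intro sum.cong) (auto simp: algebra_simps sum_distrib_left)
  also have "\<dots> = (1 - ln 2) * fb w s + (\<Sum>i\<in>I2 w. x i w * rho s i w * (\<Sum>S\<in>{S. S \<subseteq> J \<and> w \<notin> S}. p s S * (if ov i w \<in> S then 2 else 1)))"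
    unfolding sum.distrib fb_def fbar_def sum_distrib_left[symmetric]
    by (subst sum.swap) (simp add: sum_distrib_left)
  also have "\<dots> = (1 - ln 2) * fb w s + (\<Sum>i\<in>I2 w. x i w * rho s i w * DD w (ov i w) s)"
    unfolding sumD ..
  finally show ?thesis using True by simp
next
  case False
  then show ?thesis unfolding rate_formula[OF w] fb_def fbar_def by (simp add: sum_distrib_left algebra_simps)
qed


definition "FF s S = (\<Sum>w\<in>S. p s (S - {w}) * rr s (S - {w}) w) - p s S * (\<Sum>w\<in>J - S. rr s S w)"

lemma kp_int: "t \<in> {0..1} \<Longrightarrow> S \<subseteq> J \<Longrightarrow> ((\<lambda>s. FF s S) has_integral (p t S - p 0 S)) {0..t}"
  using kp unfolding kolmo_def FF_def by blast

lemma p0: "S \<subseteq> J \<Longrightarrow> p 0 S = (if S = {} then 1 else 0)"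
  using kp unfolding kolmo_def by blast

lemma sum_p0: "(\<Sum>S\<in>{S. S \<subseteq> J \<and> P S}. p 0 S) = (if P {} then 1 else 0)"
proof -
  have "(\<Sum>S\<in>{S. S \<subseteq> J \<and> P S}. p 0 S) = (\<Sum>S\<in>{S. S \<subseteq> J \<and> P S}. if S = {} then 1 else 0)"
    by (rule sum.cong) (auto simp: p0)
  also have "\<dots> = (if {} \<in> {S. S \<subseteq> J \<and> P S} then 1 else 0)"
    by (rule sum.delta[OF finPJ])
  finally show ?thesis by simp
qed

lemma int_fam:
  assumes down: "\<And>T y. P (insert y T) \<longleftrightarrow> P T \<and> y \<notin> A" and t: "t \<in> {0..1}"
  shows "((\<lambda>s. - (\<Sum>S\<in>{S. S \<subseteq> J \<and> P S}. \<Sum>w\<in>(J - S) \<inter> A. p s S * rr s S w))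
     has_integral (\<Sum>S\<in>{S. S \<subseteq> J \<and> P S}. p t S - p 0 S)) {0..t}"
proof -
  have "((\<lambda>s. \<Sum>S\<in>{S. S \<subseteq> J \<and> P S}. FF s S) has_integral (\<Sum>S\<in>{S. S \<subseteq> J \<and> P S}. p t S - p 0 S)) {0..t}"
    by (rule has_integral_sum[OF finPJ]) (use kp_int t in auto)
  moreover have "(\<Sum>S\<in>{S. S \<subseteq> J \<and> P S}. FF s S) = - (\<Sum>S\<in>{S. S \<subseteq> J \<and> P S}. \<Sum>w\<in>(J - S) \<inter> A. p s S * rr s S w)" for s
  proof -
    have "(\<Sum>S\<in>{S. S \<subseteq> J \<and> P S}. FF s S) = (\<Sum>S\<in>{S. S \<subseteq> J \<and> P S}.
        (\<Sum>w\<in>S. (\<lambda>S w. p s S * rr s S w) (S - {w}) w) - (\<Sum>w\<in>J - S. (\<lambda>S w. p s S * rr s S w) S w))"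
      unfolding FF_def by (simp add: sum_distrib_left)
    also have "\<dots> = - (\<Sum>S\<in>{S. S \<subseteq> J \<and> P S}. \<Sum>w\<in>(J - S) \<inter> A. (\<lambda>S w. p s S * rr s S w) S w)"
      by (rule flow_down[OF finJ down])
    finally show ?thesis by simp
  qed
  ultimately show ?thesis by simp
qed

lemma fb_int:
  assumes w: "w \<in> J" and t: "t \<in> {0..1}"
  shows "((\<lambda>s. - (\<Sum>S\<in>{S. S \<subseteq> J \<and> w \<notin> S}. p s S * rr s S w)) has_integral (fb w t - fb w 0)) {0..t}"
proof -
  have i: "((\<lambda>s. - (\<Sum>S\<in>{S. S \<subseteq> J \<and> w \<notin> S}. \<Sum>y\<in>(J - S) \<inter> {w}. p s S * rr s S y))
     has_integral (\<Sum>S\<in>{S. S \<subseteq> J \<and> w \<notin> S}. p t S - p 0 S)) {0..t}"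
    by (rule int_fam[OF _ t]) auto
  have e: "(\<Sum>S\<in>{S. S \<subseteq> J \<and> w \<notin> S}. \<Sum>y\<in>(J - S) \<inter> {w}. p s S * rr s S y) =
      (\<Sum>S\<in>{S. S \<subseteq> J \<and> w \<notin> S}. p s S * rr s S w)" for s
  proof (rule sum.cong[OF refl])
    fix S assume "S \<in> {S. S \<subseteq> J \<and> w \<notin> S}"
    then have "(J - S) \<inter> {w} = {w}" using w by auto
    then show "(\<Sum>y\<in>(J - S) \<inter> {w}. p s S * rr s S y) = p s S * rr s S w" by simp
  qed
  show ?thesis using i unfolding e sum_subtractf fb_def fbar_def .
qed

lemma gp_int:
  assumes u: "u \<in> J" and v: "v \<in> J" and uv: "u \<noteq> v" and t: "t \<in> {0..1}"
  shows "((\<lambda>s. - (\<Sum>S\<in>{S. S \<subseteq> J \<and> u \<notin> S \<and> v \<notin> S}. p s S * (rr s S u + rr s S v))) has_integral (gp u v t - gp u v 0)) {0..t}"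
proof -
  have i: "((\<lambda>s. - (\<Sum>S\<in>{S. S \<subseteq> J \<and> (u \<notin> S \<and> v \<notin> S)}. \<Sum>y\<in>(J - S) \<inter> {u, v}. p s S * rr s S y))
     has_integral (\<Sum>S\<in>{S. S \<subseteq> J \<and> (u \<notin> S \<and> v \<notin> S)}. p t S - p 0 S)) {0..t}"
    by (rule int_fam[OF _ t]) auto
  have e: "(\<Sum>S\<in>{S. S \<subseteq> J \<and> (u \<notin> S \<and> v \<notin> S)}. \<Sum>y\<in>(J - S) \<inter> {u, v}. p s S * rr s S y) =
      (\<Sum>S\<in>{S. S \<subseteq> J \<and> u \<notin> S \<and> v \<notin> S}. p s S * (rr s S u + rr s S v))" for s
  proof (rule sum.cong[OF refl])
    fix S assume "S \<in> {S. S \<subseteq> J \<and> (u \<notin> S \<and> v \<notin> S)}"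
    then have "(J - S) \<inter> {u, v} = {u, v}" using u v by auto
    then show "(\<Sum>y\<in>(J - S) \<inter> {u, v}. p s S * rr s S y) = p s S * (rr s S u + rr s S v)"
      using uv by (simp add: algebra_simps)
  qed
  show ?thesis using i unfolding e sum_subtractf gp_def gprime_def .
qed

lemma fb0: "fb w 0 = 1" unfolding fb_def fbar_def using sum_p0[where P="\<lambda>S. w \<notin> S"] by simp
lemma gp0: "gp u v 0 = 1" unfolding gp_def gprime_def using sum_p0[where P="\<lambda>S. u \<notin> S \<and> v \<notin> S"] by simp


lemma gb_nonneg: "s \<in> {0..1} \<Longrightarrow> gb s \<ge> 0" using H_facts(1)[OF kq] by blast
lemma ph_pos: "s \<in> {0..1} \<Longrightarrow> ph s > 0" using H_facts(2)[OF kq] unfolding ph_def by blast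
lemma ph_int: "t \<in> {0..1} \<Longrightarrow> ((\<lambda>s. - (1 - ln 2) * ph s - (if t0 < s then ln 2 else 0) * gb s) has_integral (ph t - ph 0)) {0..t}"
  using H_facts(3,5)[OF kq] unfolding ph_def by simp
lemma gb_int: "t \<in> {0..1} \<Longrightarrow> ((\<lambda>s. - 2 * RR s * (gb s - ph s)) has_integral (gb t - gb 0)) {0..t}"
  using H_facts(4,6)[OF kq] unfolding ph_def RR_def by simp
lemma ph0: "ph 0 = 1" using H_facts(5)[OF kq] unfolding ph_def by simp
lemma gb0: "gb 0 = 1" using H_facts(6)[OF kq] by simp

definition "Ge w s = (- (\<Sum>S\<in>{S. S \<subseteq> J \<and> w \<notin> S}. p s S * rr s S w)) -
   (- (1 - ln 2) * ph s - (if t0 < s then ln 2 else 0) * gb s)"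

lemma Ge_formula:
  assumes w: "w \<in> J"
  shows "Ge w s = - (1 - ln 2) * (fb w s - ph s) +
     (if t0 < s then (\<Sum>i\<in>I2 w. x i w * (gb s - rho s i w * DD w (ov i w) s)) else 0)"
proof -
  have "(\<Sum>i\<in>I2 w. x i w * (gb s - rho s i w * DD w (ov i w) s)) =
     ln 2 * gb s - (\<Sum>i\<in>I2 w. x i w * rho s i w * DD w (ov i w) s)"
  proof -
    have "(\<Sum>i\<in>I2 w. x i w * (gb s - rho s i w * DD w (ov i w) s)) =
        (\<Sum>i\<in>I2 w. gb s * x i w) - (\<Sum>i\<in>I2 w. x i w * rho s i w * DD w (ov i w) s)"
      unfolding sum_subtractf[symmetric] by (rule sum.cong) (auto simp: algebra_simps)
    also have "(\<Sum>i\<in>I2 w. gb s * x i w) = gb s * ln 2"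
      unfolding sum_distrib_left[symmetric] sum_I2[OF w] ..
    finally show ?thesis by simp
  qed
  then show ?thesis unfolding Ge_def sum_pr[OF w] by (simp add: algebra_simps)
qed

lemma Ge_int: "w \<in> J \<Longrightarrow> t \<in> {0..1} \<Longrightarrow> (Ge w has_integral ((fb w t - ph t) - (fb w 0 - ph 0))) {0..t}"
  unfolding Ge_def using has_integral_diff[OF fb_int ph_int] by (simp add: algebra_simps)

lemma E1: assumes w: "w \<in> J" shows "\<forall>s\<in>{0..1}. fb w s - ph s \<ge> 0"
proof (rule sign_lemma[where G="Ge w"])
  show "\<forall>s\<in>{0..1}. (Ge w has_integral ((fb w s - ph s) - (fb w 0 - ph 0))) {0..s}"
    using Ge_int[OF w] by blast
  show "0 \<le> fb w 0 - ph 0" using fb0 ph0 by simp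
next
  fix s :: real assume s: "s \<in> {0..1}" and e: "fb w s - ph s \<le> 0"
  have c: "0 \<le> - (1 - ln 2) * (fb w s - ph s)"
    using e ln_2_less_1 by (simp add: mult_nonpos_nonpos)
  have "0 \<le> (\<Sum>i\<in>I2 w. x i w * (gb s - rho s i w * DD w (ov i w) s))"
  proof (rule sum_nonneg)
    fix i assume i: "i \<in> I2 w"
    have x: "x i w \<ge> 0" using x_pos[OF I2_props(1,2)[OF i]] by simp
    have "rho s i w * DD w (ov i w) s \<le> gb s"
      unfolding rho_def by (rule min_div_le[OF gb_nonneg[OF s]])
    then show "0 \<le> x i w * (gb s - rho s i w * DD w (ov i w) s)" using x by simp
  qed
  then show "0 \<le> Ge w s" unfolding Ge_formula[OF w] using c by simp
qed simp


lemma p_cont: "S \<subseteq> J \<Longrightarrow> continuous_on {0..1} (\<lambda>s. p s S)"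
  by (rule int_cont[where G="\<lambda>s. FF s S"]) (use kp_int in auto)

lemma DD_cont: "continuous_on {0..1} (DD w v)"
proof -
  have "continuous_on {0..1} (\<lambda>s. 2 * (\<Sum>S\<in>{S. S \<subseteq> J \<and> w \<notin> S}. p s S) - (\<Sum>S\<in>{S. S \<subseteq> J \<and> w \<notin> S \<and> v \<notin> S}. p s S))"
    by (intro continuous_intros continuous_on_sum p_cont) auto
  then show ?thesis unfolding DD_def fb_def gp_def fbar_def gprime_def by (simp add: fun_eq_iff)
qed

lemma FF_nonneg:
  assumes S: "S \<subseteq> J" and sub: "\<forall>w\<in>S. p s (S - {w}) \<ge> 0" and pS: "p s S \<le> 0"
    and r: "\<forall>T w. w \<in> J \<longrightarrow> rr s T w \<ge> 0"
  shows "FF s S \<ge> 0"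
proof -
  have "0 \<le> (\<Sum>w\<in>S. p s (S - {w}) * rr s (S - {w}) w)"
    using sub r S by (intro sum_nonneg) auto
  moreover have "0 \<le> (\<Sum>w\<in>J - S. rr s S w)" using r by (intro sum_nonneg) auto
  then have "p s S * (\<Sum>w\<in>J - S. rr s S w) \<le> 0" using pS by (simp add: mult_nonpos_nonneg)
  ultimately show ?thesis unfolding FF_def by simp
qed

lemma positivity: "\<forall>s\<in>{0..1}. \<forall>S. S \<subseteq> J \<longrightarrow> p s S \<ge> 0"
proof (rule ccontr)
  assume neg: "\<not> ?thesis"
  define B where "B = {s\<in>{0..1}. \<exists>S. S \<subseteq> J \<and> p s S < 0}"
  obtain s0 S0 where s0: "s0 \<in> {0..1}" "S0 \<subseteq> J" "\<not> p s0 S0 \<ge> 0" using neg by blast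
  then have "s0 \<in> B" unfolding B_def by (auto simp: not_le)
  then have Bne: "B \<noteq> {}" by blast
  have Bbdd: "bdd_below B" unfolding B_def by (rule bdd_belowI[of _ 0]) auto
  define T where "T = Inf B"
  have T0: "0 \<le> T" unfolding T_def using Bne by (intro cInf_greatest) (auto simp: B_def)
  have TB: "T \<le> \<beta>" if "\<beta> \<in> B" for \<beta> unfolding T_def by (rule cInf_lower[OF that Bbdd])
  have T1: "T \<le> 1" using TB[OF \<open>s0 \<in> B\<close>] s0 by simp
  have before: "p s S \<ge> 0" if "s \<in> {0..<T}" "S \<subseteq> J" for s S
  proof (rule ccontr)
    assume "\<not> p s S \<ge> 0"
    then have "s \<in> B" using that T1 unfolding B_def by auto
    then have "T \<le> s" by (rule TB)
    then show False using that by simp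
  qed
  have atT: "p T S \<ge> 0" if S: "S \<subseteq> J" for S
  proof (cases "T = 0")
    case True
    then show ?thesis using p0[OF S] by simp
  next
    case False
    then have Tp: "0 < T" using T0 by simp
    have c: "continuous_on {0..T} (\<lambda>s. p s S)"
      by (rule continuous_on_subset[OF p_cont[OF S]]) (use T1 in auto)
    have cl: "closed ({0..T} \<inter> (\<lambda>s. p s S) -` {0..})"
      by (rule continuous_closed_preimage[OF c]) auto
    have "{0..<T} \<subseteq> {0..T} \<inter> (\<lambda>s. p s S) -` {0..}" using before[OF _ S] by auto
    then have "closure {0..<T} \<subseteq> {0..T} \<inter> (\<lambda>s. p s S) -` {0..}"
      using cl by (rule closure_minimal)
    moreover have "T \<in> closure {0..<T}" using Tp by simp
    ultimately have "T \<in> {0..T} \<inter> (\<lambda>s. p s S) -` {0..}" by blast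
    then show ?thesis by simp
  qed
  have Tin: "T \<in> {0..1}" using T0 T1 by simp
  have Dpos: "DD w v T > 0" if "w \<in> J" "v \<in> J" for w v
  proof -
    have "fb w T - gp w v T \<ge> 0" unfolding fb_gp using atT by (intro sum_nonneg) auto
    moreover have "fb w T - ph T \<ge> 0" using E1[OF \<open>w \<in> J\<close>] Tin by blast
    moreover have "ph T > 0" using ph_pos[OF Tin] .
    ultimately show ?thesis unfolding DD_def by simp
  qed
  have ev: "\<forall>wv\<in>J \<times> J. eventually (\<lambda>s. DD (fst wv) (snd wv) s > 0) (at T within {0..1})"
  proof
    fix wv assume wv: "wv \<in> J \<times> J"
    have "continuous (at T within {0..1}) (DD (fst wv) (snd wv))"
      using DD_cont Tin continuous_on_eq_continuous_within by blast
    then have "(DD (fst wv) (snd wv) \<longlongrightarrow> DD (fst wv) (snd wv) T) (at T within {0..1})"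
      by (simp add: continuous_within)
    then show "eventually (\<lambda>s. DD (fst wv) (snd wv) s > 0) (at T within {0..1})"
      by (rule order_tendstoD(1)) (use Dpos wv in auto)
  qed
  have "eventually (\<lambda>s. \<forall>wv\<in>J \<times> J. DD (fst wv) (snd wv) s > 0) (at T within {0..1})"
    by (rule eventually_ball_finite) (use finJ ev in auto)
  then obtain d where d: "d > 0" "\<forall>s\<in>{0..1}. s \<noteq> T \<and> dist s T < d \<longrightarrow> (\<forall>wv\<in>J \<times> J. DD (fst wv) (snd wv) s > 0)"
    unfolding eventually_at by blast
  define b where "b = min 1 (T + d / 2)"
  have Tb: "T \<le> b" using d T1 unfolding b_def by simp
  have b1: "b \<le> 1" unfolding b_def by simp
  have Dnb: "DD w v s \<ge> 0" if s: "s \<in> {T..b}" and w: "w \<in> J" and v: "v \<in> J" for s w v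
  proof (cases "s = T")
    case True then show ?thesis using Dpos[OF w v] by simp
  next
    case False
    have "s \<in> {0..1}" "dist s T < d" using s T0 b1 d unfolding b_def by (auto simp: dist_real_def)
    then have "\<forall>wv\<in>J \<times> J. DD (fst wv) (snd wv) s > 0" using d(2) False by blast
    then have "DD (fst (w, v)) (snd (w, v)) s > 0" using w v by blast
    then show ?thesis by simp
  qed
  have rnb: "rr s S w \<ge> 0" if s: "s \<in> {T..b}" and w: "w \<in> J" for s S w
    by (rule rate_nonneg[OF w]) (use s T0 b1 gb_nonneg Dnb[OF s w] in auto)
  have good: "\<forall>S. S \<subseteq> J \<and> card S = n \<longrightarrow> (\<forall>s\<in>{T..b}. p s S \<ge> 0)" for n
  proof (induction n rule: less_induct)
    case (less n)
    show ?case
    proof (intro allI impI)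
      fix S assume S: "S \<subseteq> J \<and> card S = n"
      have finS: "finite S" using S finJ by (auto intro: finite_subset)
      show "\<forall>s\<in>{T..b}. p s S \<ge> 0"
      proof (rule sign_lemma[where G="\<lambda>s. FF s S"])
        show "T \<le> b" by (rule Tb)
        show "\<forall>s\<in>{T..b}. ((\<lambda>s. FF s S) has_integral (p s S - p T S)) {T..s}"
        proof
          fix s assume s: "s \<in> {T..b}"
          show "((\<lambda>s. FF s S) has_integral (p s S - p T S)) {T..s}"
            by (rule int_sub[where a=0 and b=1 and y="\<lambda>s. p s S"]) (use kp_int S s T0 b1 in auto)
        qed
        show "0 \<le> p T S" using atT S by blast
      next
        fix s assume s: "s \<in> {T..b}" and ps: "p s S \<le> 0"
        have sub: "\<forall>w\<in>S. p s (S - {w}) \<ge> 0"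
        proof
          fix w assume w: "w \<in> S"
          have "card (S - {w}) < card S" using finS w by (rule card_Diff1_less)
          then have "card (S - {w}) < n" using S by simp
          then show "p s (S - {w}) \<ge> 0" using less.IH S s by blast
        qed
        show "0 \<le> FF s S"
          by (rule FF_nonneg[OF _ sub ps]) (use S rnb[OF s] in auto)
      qed
    qed
  qed
  obtain \<beta> where \<beta>: "\<beta> \<in> B" "T \<le> \<beta>" "\<beta> \<le> b"
  proof (cases "T < b")
    case True
    then have "Inf B < b" unfolding T_def .
    then obtain \<beta> where "\<beta> \<in> B" "\<beta> < b" using cInf_less_iff[OF Bne Bbdd] by blast
    then show ?thesis using that TB by auto
  next
    case False
    then have "b = T" using Tb by simp
    then have "b = 1" using d unfolding b_def by (simp add: min_def split: if_splits)
    obtain \<beta> where "\<beta> \<in> B" using Bne by blast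
    then show ?thesis using that TB \<open>b = 1\<close> unfolding B_def by auto
  qed
  then obtain S where "S \<subseteq> J" "p \<beta> S < 0" unfolding B_def by blast
  moreover have "\<beta> \<in> {T..b}" using \<beta> by simp
  have "\<forall>s\<in>{T..b}. p s S \<ge> 0" using good[of "card S"] \<open>S \<subseteq> J\<close> by blast
  then have "p \<beta> S \<ge> 0" using \<open>\<beta> \<in> {T..b}\<close> by blast
  then show False using \<open>p \<beta> S < 0\<close> by simp
qed


lemma gp_sym: "gp u v s = gp v u s"
  unfolding gp_def gprime_def by (rule sum.cong) auto

lemma DD_nonneg: "s \<in> {0..1} \<Longrightarrow> DD w v s \<ge> 0"
proof -
  assume s: "s \<in> {0..1}"
  have "fb w s - gp w v s \<ge> 0" unfolding fb_gp using positivity s by (intro sum_nonneg) auto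
  moreover have "fb w s \<ge> 0" unfolding fb_def fbar_def using positivity s by (intro sum_nonneg) auto
  ultimately show ?thesis unfolding DD_def by simp
qed

lemma part_le:
  assumes s: "s \<in> {0..1}" and u: "u \<in> J"
  shows "(\<Sum>S\<in>{S. S \<subseteq> J \<and> u \<notin> S \<and> v \<in> S}. p s S * rr s S u) \<le> RR s * (fb u s - gp u v s)"
proof -
  have "(\<Sum>S\<in>{S. S \<subseteq> J \<and> u \<notin> S \<and> v \<in> S}. p s S * rr s S u) \<le> (\<Sum>S\<in>{S. S \<subseteq> J \<and> u \<notin> S \<and> v \<in> S}. RR s * p s S)"
  proof (rule sum_mono)
    fix S assume S: "S \<in> {S. S \<subseteq> J \<and> u \<notin> S \<and> v \<in> S}"
    have "p s S \<ge> 0" using positivity s S by blast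
    then have "p s S * rr s S u \<le> p s S * RR s" using rate_le[OF u] by (intro mult_left_mono) auto
    then show "p s S * rr s S u \<le> RR s * p s S" by (simp add: mult.commute)
  qed
  also have "\<dots> = RR s * (fb u s - gp u v s)" unfolding fb_gp sum_distrib_left ..
  finally show ?thesis .
qed

definition "GQ u v s = (- (\<Sum>S\<in>{S. S \<subseteq> J \<and> u \<notin> S}. p s S * rr s S u)) + (- (\<Sum>S\<in>{S. S \<subseteq> J \<and> v \<notin> S}. p s S * rr s S v))
   - (- (\<Sum>S\<in>{S. S \<subseteq> J \<and> u \<notin> S \<and> v \<notin> S}. p s S * (rr s S u + rr s S v))) - (- 2 * RR s * (gb s - ph s))"

lemma Qstep:
  assumes u: "u \<in> J" and v: "v \<in> J" and uv: "u \<noteq> v"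
  shows "\<forall>s\<in>{0..1}. fb u s + fb v s - gp u v s - gb s \<ge> 0"
proof (rule sign_lemma[where G="GQ u v"])
  show "\<forall>s\<in>{0..1}. (GQ u v has_integral (fb u s + fb v s - gp u v s - gb s - (fb u 0 + fb v 0 - gp u v 0 - gb 0))) {0..s}"
  proof
    fix t :: real assume t: "t \<in> {0..1}"
    show "(GQ u v has_integral (fb u t + fb v t - gp u v t - gb t - (fb u 0 + fb v 0 - gp u v 0 - gb 0))) {0..t}"
      unfolding GQ_def
      using has_integral_diff[OF has_integral_diff[OF has_integral_add[OF fb_int[OF u t] fb_int[OF v t]] gp_int[OF u v uv t]] gb_int[OF t]]
      by (simp add: algebra_simps)
  qed
  show "0 \<le> fb u 0 + fb v 0 - gp u v 0 - gb 0" using fb0 gp0 gb0 by simp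
next
  fix s :: real assume s: "s \<in> {0..1}" and y: "fb u s + fb v s - gp u v s - gb s \<le> 0"
  let ?Au = "\<Sum>S\<in>{S. S \<subseteq> J \<and> u \<notin> S \<and> v \<in> S}. p s S * rr s S u"
  let ?Av = "\<Sum>S\<in>{S. S \<subseteq> J \<and> v \<notin> S \<and> u \<in> S}. p s S * rr s S v"
  let ?Nu = "\<Sum>S\<in>{S. S \<subseteq> J \<and> u \<notin> S \<and> v \<notin> S}. p s S * rr s S u"
  let ?Nv = "\<Sum>S\<in>{S. S \<subseteq> J \<and> u \<notin> S \<and> v \<notin> S}. p s S * rr s S v"
  have e1: "(\<Sum>S\<in>{S. S \<subseteq> J \<and> u \<notin> S}. p s S * rr s S u) = ?Nu + ?Au"
    by (rule split_v)
  have e2: "(\<Sum>S\<in>{S. S \<subseteq> J \<and> v \<notin> S}. p s S * rr s S v) =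
      (\<Sum>S\<in>{S. S \<subseteq> J \<and> v \<notin> S \<and> u \<notin> S}. p s S * rr s S v) + ?Av"
    by (rule split_v)
  have e3: "{S. S \<subseteq> J \<and> v \<notin> S \<and> u \<notin> S} = {S. S \<subseteq> J \<and> u \<notin> S \<and> v \<notin> S}" by auto
  have e4: "(\<Sum>S\<in>{S. S \<subseteq> J \<and> u \<notin> S \<and> v \<notin> S}. p s S * (rr s S u + rr s S v)) = ?Nu + ?Nv"
    by (simp add: distrib_left sum.distrib)
  have G: "GQ u v s = - ?Au - ?Av + 2 * RR s * (gb s - ph s)"
    unfolding GQ_def e1 e2 e3 e4 by simp
  have Au: "?Au \<le> RR s * (fb u s - gp u v s)" by (rule part_le[OF s u])
  have Av: "?Av \<le> RR s * (fb v s - gp u v s)" using part_le[OF s v, of u] gp_sym by simp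
  have RR0: "RR s \<ge> 0" unfolding RR_def using ln_2_less_1 by simp
  have eu: "fb u s - ph s \<ge> 0" using E1[OF u] s by blast
  have ev: "fb v s - ph s \<ge> 0" using E1[OF v] s by blast
  have "0 \<le> RR s * (2 * (gb s - ph s) - (fb u s - gp u v s) - (fb v s - gp u v s))"
    using RR0 y eu ev by (intro mult_nonneg_nonneg) auto
  then show "0 \<le> GQ u v s" unfolding G using Au Av by (simp add: algebra_simps)
qed simp

lemma Ge_bound:
  assumes w: "w \<in> J" and s: "s \<in> {0..1}" and M: "\<forall>v\<in>J. fb v s - ph s \<le> M"
  shows "Ge w s \<le> ln 2 * M"
proof -
  have ew: "fb w s - ph s \<ge> 0" using E1[OF w] s by blast
  have M0: "M \<ge> 0" using M w ew by force
  have "(1 - ln 2) * (fb w s - ph s) \<ge> 0" using ew ln_2_less_1 by (intro mult_nonneg_nonneg) auto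
  then have c: "- (1 - ln 2) * (fb w s - ph s) \<le> 0" by (metis minus_mult_left neg_le_0_iff_le)
  have "(\<Sum>i\<in>I2 w. x i w * (gb s - rho s i w * DD w (ov i w) s)) \<le> (\<Sum>i\<in>I2 w. x i w * M)"
  proof (rule sum_mono)
    fix i assume i: "i \<in> I2 w"
    have x: "x i w \<ge> 0" using x_pos[OF I2_props(1,2)[OF i]] by simp
    let ?v = "ov i w"
    have v: "?v \<in> J" "?v \<noteq> w" using I2_props(7,8)[OF i] by auto
    have D0: "DD w ?v s \<ge> 0" by (rule DD_nonneg[OF s])
    have rD: "rho s i w * DD w ?v s = min (gb s) (DD w ?v s)"
      unfolding rho_def by (rule min_div_eq[OF gb_nonneg[OF s] D0])
    have Q: "fb w s + fb ?v s - gp w ?v s - gb s \<ge> 0" using Qstep[OF w v(1) v(2)[symmetric]] s by blast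
    have ev: "fb ?v s - ph s \<le> M" using M v by blast
    have "DD w ?v s \<ge> gb s - M" using Q ev ew unfolding DD_def by simp
    then have "gb s - rho s i w * DD w ?v s \<le> M" unfolding rD using M0 by (simp add: min_def)
    then show "x i w * (gb s - rho s i w * DD w (ov i w) s) \<le> x i w * M" using x by (intro mult_left_mono)
  qed
  also have "\<dots> = ln 2 * M" unfolding sum_distrib_right[symmetric] sum_I2[OF w] ..
  finally have S: "(\<Sum>i\<in>I2 w. x i w * (gb s - rho s i w * DD w (ov i w) s)) \<le> ln 2 * M" .
  have "ln 2 * M \<ge> 0" using M0 by simp
  then show ?thesis unfolding Ge_formula[OF w] using c S by auto
qed

lemma E2: assumes Jne: "J \<noteq> {}" shows "\<forall>w\<in>J. \<forall>s\<in>{0..1}. fb w s - ph s = 0"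
proof -
  have ln2: "ln (2::real) < 1" "ln (2::real) \<ge> 0" using ln_2_less_1 by auto
  have bnd: "Ge w s \<le> ln 2 * M" if "\<forall>v\<in>J. \<forall>s\<in>{a..b}. fb v s - ph s \<le> M" "w \<in> J" "s \<in> {a..b}" "{a..b} \<subseteq> {0..1}"
    for M w and s a b :: real
    using Ge_bound[OF that(2), of s M] that by auto
  have A: "\<forall>w\<in>J. \<forall>s\<in>{0..1/2}. fb w s - ph s = 0"
  proof (rule local_gron[where G=Ge and K="ln 2" and e="\<lambda>w s. fb w s - ph s", OF finJ Jne])
    show "\<forall>w\<in>J. \<forall>s\<in>{0..1/2}. (Ge w has_integral (fb w s - ph s - (fb w 0 - ph 0))) {0..s}"
      using Ge_int by auto
    show "\<forall>w\<in>J. fb w 0 - ph 0 = 0" using fb0 ph0 by simp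
    show "\<forall>w\<in>J. \<forall>s\<in>{0..1/2}. fb w s - ph s \<ge> 0" using E1 by auto
    show "ln 2 * (1 / 2 - 0) < (1::real)" using ln2 by simp
    fix M w and s :: real assume "\<forall>v\<in>J. \<forall>s\<in>{0..1/2}. fb v s - ph s \<le> M" "w \<in> J" "s \<in> {0..1/2}"
    then show "Ge w s \<le> ln 2 * M" using bnd[of 0 "1/2" M w s] by auto
  qed (use ln2 in auto)
  have B: "\<forall>w\<in>J. \<forall>s\<in>{1/2..1}. fb w s - ph s = 0"
  proof (rule local_gron[where G=Ge and K="ln 2" and e="\<lambda>w s. fb w s - ph s", OF finJ Jne])
    show "\<forall>w\<in>J. \<forall>s\<in>{1/2..1}. (Ge w has_integral (fb w s - ph s - (fb w (1/2) - ph (1/2)))) {1/2..s}"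
    proof (intro ballI)
      fix w s assume w: "w \<in> J" and s: "s \<in> {1/2..(1::real)}"
      show "(Ge w has_integral (fb w s - ph s - (fb w (1/2) - ph (1/2)))) {1/2..s}"
        by (rule int_sub[where a=0 and b=1 and y="\<lambda>s. fb w s - ph s"]) (use Ge_int[OF w] s in auto)
    qed
    show "\<forall>w\<in>J. fb w (1/2) - ph (1/2) = 0" using A by auto
    show "\<forall>w\<in>J. \<forall>s\<in>{1/2..1}. fb w s - ph s \<ge> 0" using E1 by auto
    show "ln 2 * (1 - 1 / 2) < (1::real)" using ln2 by simp
    fix M w and s :: real assume "\<forall>v\<in>J. \<forall>s\<in>{1/2..1}. fb v s - ph s \<le> M" "w \<in> J" "s \<in> {1/2..1}"
    then show "Ge w s \<le> ln 2 * M" using bnd[of "1/2" 1 M w s] by auto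
  qed (use ln2 in auto)
  show ?thesis
  proof (intro ballI)
    fix w s assume "w \<in> J" "s \<in> {0..(1::real)}"
    then show "fb w s - ph s = 0" using A B by (cases "s \<le> 1/2") auto
  qed
qed

lemma main:
  assumes u: "u \<in> J" and v: "v \<in> J" and uv: "u \<noteq> v" and t: "t \<in> {0..1}"
  shows "2 * fbar J p u t - gprime J p u v t \<ge> 1 - q t UNIV"
proof -
  have "fb u t + fb v t - gp u v t - gb t \<ge> 0" using Qstep[OF u v uv] t by blast
  moreover have "fb u t - ph t = 0" "fb v t - ph t = 0" using E2 u v t by blast+
  ultimately show ?thesis unfolding fb_def gp_def by simp
qed

end

theorem lemma4p6:
  fixes I :: "'i set" and J :: "'j set" and lam :: "'i \<Rightarrow> real"
    and nbr :: "'i \<Rightarrow> 'j set" and x :: "'i \<Rightarrow> 'j \<Rightarrow> real" and lab :: "'i \<Rightarrow> 'j \<Rightarrow> bool"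
    and t0 t :: real and q :: "real \<Rightarrow> bool set \<Rightarrow> real" and p :: "real \<Rightarrow> 'j set \<Rightarrow> real"
    and i :: 'i and u v :: 'j
  assumes "standing I J lam nbr x"
    and "valid_labeling I J nbr x lab"
    and "0 \<le> t0" and "t0 \<le> 1"
    and "kolmo (UNIV :: bool set) (rateRES t0) q"
    and "kolmo J (aux_rate I J lam nbr lab t0 (\<lambda>s. 1 - q s UNIV) p) p"
    and "i \<in> I" and "nbr i = {u, v}" and "u \<noteq> v"
    and "t \<in> {0..1}"
  shows "2 * fbar J p u t - gprime J p u v t \<ge> 1 - q t UNIV"
proof -
  interpret AUXL I J lam nbr x lab t0 q p
    by (unfold_locales) (rule assms)+
  have uv: "u \<in> J" "v \<in> J" using nbrJ[OF assms(7)] assms(8) by auto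
  show ?thesis by (rule main[OF uv assms(9) assms(10)])
qed

end
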